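(* Let $C,C'$ be finite-dimensional complexes of complex vector spaces whose differentials are matrices with entries in $\mathbb C[k_1,\dots,k_m]$, both having homology only along $Q=0$ for an irreducible $Q\in\mathbb C[k]$. Let $Q(q)=0$ and suppose there is a homotopy equivalence $C\leftrightarrow C'$ given by four matrices with entries in $\mathbb C(k)$ that are regular at $q$. Then $q$ is a regular homology point of $C$ if and only if it is a regular homology point of $C'$.
   Context: A homotopy equivalence: chain maps $R:C\to C'$, $L:C'\to C$ and $u\in\operatorname{End}^{-1}(C)$, $u'\in\operatorname{End}^{-1}(C')$ with $LR=1-du-ud$, $RL=1-d'u'-u'd'$ (here holding over $\mathbb C(k)$). For a complex $C$ with polynomial differential $d$, $\mathfrak h_k$ is the homology at $k$. A point $q$ is a regular homology point if $Q(q)=0$ and $q$ is a smooth point of $Q=0$; $\dim\mathfrak h_k=\dim\mathfrak h_q$ for all $k$ with $Q(k)=0$ in a Zariski neighborhood of $q$; and there is $\xi\in T_q\mathbb C^m$ with $\dot Q\ne0$ such that the differential induced on $\mathfrak h_q$ by $\dot d$ (derivative along $\xi$ at $q$) is exact. *)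

theory Defs
  imports "HOL-Analysis.Analysis"
begin

section \<open>Polynomial functions on C^m (C[k_1,...,k_m])\<close>

text \<open>Since C is infinite, C[k_1..k_m] is identified with the ring of polynomial
functions on C^m; the index type 'm (finite) has m = CARD('m) elements.\<close>

inductive mpoly_fun :: "(complex^'m \<Rightarrow> complex) \<Rightarrow> bool" where
  const: "mpoly_fun (\<lambda>k. c)"
| coord: "mpoly_fun (\<lambda>k. k $ i)"
| add: "mpoly_fun f \<Longrightarrow> mpoly_fun g \<Longrightarrow> mpoly_fun (\<lambda>k. f k + g k)"
| mult: "mpoly_fun f \<Longrightarrow> mpoly_fun g \<Longrightarrow> mpoly_fun (\<lambda>k. f k * g k)"

definition is_const_fun :: "(complex^'m \<Rightarrow> complex) \<Rightarrow> bool" where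
  "is_const_fun f \<longleftrightarrow> (\<exists>c. \<forall>k. f k = c)"

text \<open>Irreducible element of C[k]: a non-unit nonzero (i.e. nonconstant)
polynomial whose factorisations always have a unit (nonzero constant) factor.\<close>
definition irreducible_mpoly :: "(complex^'m \<Rightarrow> complex) \<Rightarrow> bool" where
  "irreducible_mpoly Q \<longleftrightarrow> mpoly_fun Q \<and> \<not> is_const_fun Q \<and>
     (\<forall>A B. mpoly_fun A \<and> mpoly_fun B \<and> (\<forall>k. Q k = A k * B k)
        \<longrightarrow> is_const_fun A \<or> is_const_fun B)"

text \<open>Matrix with polynomial entries.\<close>
definition poly_mat :: "(complex^'m \<Rightarrow> complex^'a^'b) \<Rightarrow> bool" where
  "poly_mat M \<longleftrightarrow> (\<forall>i j. mpoly_fun (\<lambda>k. M k $ i $ j))"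

section \<open>Rational functions regular at q, identities over C(k)\<close>

definition rat_regular_at :: "complex^'m \<Rightarrow> (complex^'m \<Rightarrow> complex) \<Rightarrow> bool" where
  "rat_regular_at q f \<longleftrightarrow> (\<exists>p g. mpoly_fun p \<and> mpoly_fun g \<and> g q \<noteq> 0 \<and>
       (\<forall>k. f k = p k / g k))"

definition rat_mat_regular_at :: "complex^'m \<Rightarrow> (complex^'m \<Rightarrow> complex^'a^'b) \<Rightarrow> bool" where
  "rat_mat_regular_at q M \<longleftrightarrow> (\<forall>i j. rat_regular_at q (\<lambda>k. M k $ i $ j))"

text \<open>Two rational (matrix-valued) functions are equal in C(k) iff they agree on
a nonempty Zariski open set, i.e. off the zero set of a nonzero polynomial.\<close>
definition eq_over_Ck :: "(complex^'m \<Rightarrow> 'x) \<Rightarrow> (complex^'m \<Rightarrow> 'x) \<Rightarrow> bool" where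
  "eq_over_Ck F G \<longleftrightarrow> (\<exists>g. mpoly_fun g \<and> (\<exists>k. g k \<noteq> 0) \<and> (\<forall>k. g k \<noteq> 0 \<longrightarrow> F k = G k))"

section \<open>Graded spaces and degrees of maps\<close>

text \<open>A finite-dimensional graded complex vector space is C^'n with a grading of the
standard basis, deg :: 'n => int. A map C^'a -> C^'b has degree r if it maps
degree-j basis vectors into degree j+r.\<close>
definition has_degree :: "('a \<Rightarrow> int) \<Rightarrow> ('b \<Rightarrow> int) \<Rightarrow> int \<Rightarrow> (complex^'m \<Rightarrow> complex^'a^'b) \<Rightarrow> bool" where
  "has_degree dA dB r M \<longleftrightarrow> (\<forall>k i j. dB i \<noteq> dA j + r \<longrightarrow> M k $ i $ j = 0)"

section \<open>Homology at a point\<close>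

definition hdim :: "complex^'n^'n \<Rightarrow> nat" where
  "hdim A = vec.dim {x. A *v x = 0} - vec.dim (range (\<lambda>x. A *v x))"

definition poly_complex :: "('n \<Rightarrow> int) \<Rightarrow> (complex^'m \<Rightarrow> complex^'n^'n) \<Rightarrow> bool" where
  "poly_complex deg d \<longleftrightarrow> poly_mat d \<and> has_degree deg deg 1 d \<and> (\<forall>k. d k ** d k = 0)"

definition homology_only_along :: "(complex^'m \<Rightarrow> complex) \<Rightarrow> (complex^'m \<Rightarrow> complex^'n^'n) \<Rightarrow> bool" where
  "homology_only_along Q d \<longleftrightarrow> (\<forall>k. Q k \<noteq> 0 \<longrightarrow> hdim (d k) = 0)"

section \<open>Regular homology points\<close>

definition dirderiv :: "(complex^'m \<Rightarrow> complex) \<Rightarrow> complex^'m \<Rightarrow> complex^'m \<Rightarrow> complex" where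
  "dirderiv f q \<xi> = deriv (\<lambda>t. f (q + t *s \<xi>)) 0"

definition dmat_dot :: "(complex^'m \<Rightarrow> complex^'n^'n) \<Rightarrow> complex^'m \<Rightarrow> complex^'m \<Rightarrow> complex^'n^'n" where
  "dmat_dot d q \<xi> = (\<chi> i j. dirderiv (\<lambda>k. d k $ i $ j) q \<xi>)"

text \<open>Exactness of the differential induced by B on H = ker A / im A, expressed on
representatives: (preimage in ker A of) the kernel of the induced map equals
(preimage of) its image.\<close>
definition induced_exact :: "complex^'n^'n \<Rightarrow> complex^'n^'n \<Rightarrow> bool" where
  "induced_exact A B \<longleftrightarrow>
     {x. A *v x = 0 \<and> B *v x \<in> range (\<lambda>z. A *v z)} =
     {B *v y + A *v z | y z. A *v y = 0}"

text \<open>Smooth point of the hypersurface Q = 0 (Q irreducible, hence reduced):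
Q(q) = 0 and the gradient of Q at q is nonzero.\<close>
definition smooth_point :: "(complex^'m \<Rightarrow> complex) \<Rightarrow> complex^'m \<Rightarrow> bool" where
  "smooth_point Q q \<longleftrightarrow> Q q = 0 \<and> (\<exists>i. dirderiv Q q (axis i 1) \<noteq> 0)"

definition regular_homology_point ::
  "(complex^'m \<Rightarrow> complex) \<Rightarrow> (complex^'m \<Rightarrow> complex^'n^'n) \<Rightarrow> complex^'m \<Rightarrow> bool" where
  "regular_homology_point Q d q \<longleftrightarrow>
     Q q = 0 \<and> smooth_point Q q \<and>
     (\<exists>g. mpoly_fun g \<and> g q \<noteq> 0 \<and>
        (\<forall>k. Q k = 0 \<and> g k \<noteq> 0 \<longrightarrow> hdim (d k) = hdim (d q))) \<and>
     (\<exists>\<xi>. dirderiv Q q \<xi> \<noteq> 0 \<and> induced_exact (d q) (dmat_dot d q \<xi>))"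

section \<open>Homotopy equivalences with rational entries\<close>

definition homotopy_equiv_Ck ::
  "('n \<Rightarrow> int) \<Rightarrow> ('p \<Rightarrow> int) \<Rightarrow> (complex^'m \<Rightarrow> complex^'n^'n) \<Rightarrow> (complex^'m \<Rightarrow> complex^'p^'p)
   \<Rightarrow> (complex^'m \<Rightarrow> complex^'n^'p) \<Rightarrow> (complex^'m \<Rightarrow> complex^'p^'n)
   \<Rightarrow> (complex^'m \<Rightarrow> complex^'n^'n) \<Rightarrow> (complex^'m \<Rightarrow> complex^'p^'p) \<Rightarrow> bool" where
  "homotopy_equiv_Ck degC degC' d d' R L u u' \<longleftrightarrow>
     has_degree degC degC' 0 R \<and> has_degree degC' degC 0 L \<and>
     has_degree degC degC (-1) u \<and> has_degree degC' degC' (-1) u' \<and>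
     eq_over_Ck (\<lambda>k. R k ** d k) (\<lambda>k. d' k ** R k) \<and>
     eq_over_Ck (\<lambda>k. L k ** d' k) (\<lambda>k. d k ** L k) \<and>
     eq_over_Ck (\<lambda>k. L k ** R k) (\<lambda>k. mat 1 - d k ** u k - u k ** d k) \<and>
     eq_over_Ck (\<lambda>k. R k ** L k) (\<lambda>k. mat 1 - d' k ** u' k - u' k ** d' k)"

end

theory Submission
  imports Defs "HOL-Computational_Algebra.Polynomial"
begin


lemma mv_subspace_kernel: "vec.subspace {x. (A::complex^'n^'m) *v x = 0}"
  unfolding vec.subspace_def
  by (auto simp: matrix_vector_right_distrib vec.linear_scale[OF matrix_vector_mul_linear_gen])

lemma mv_subspace_range: "vec.subspace (range (\<lambda>x. (A::complex^'n^'m) *v x))"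
  by (rule vec.linear_subspace_image[OF matrix_vector_mul_linear_gen vec.subspace_UNIV])

lemma complement_exists:
  fixes I K :: "(complex^'n) set"
  assumes "vec.subspace I" "vec.subspace K" "I \<subseteq> K"
  shows "\<exists>W. vec.subspace W \<and> W \<subseteq> K \<and> W \<inter> I \<subseteq> {0} \<and> vec.dim K \<le> vec.dim W + vec.dim I"
proof -
  obtain B where B: "B \<subseteq> I" "vec.independent B" "I \<subseteq> vec.span B" "card B = vec.dim I"
    using vec.basis_exists by blast
  obtain C where C: "B \<subseteq> C" "C \<subseteq> K" "vec.independent C" "K \<subseteq> vec.span C"
    using vec.maximal_independent_subset_extend[of B K] B assms(3) by blast
  have fC: "finite C" using C vec.finiteI_independent by blast
  define W where "W = vec.span (C - B)"
  have sW: "vec.subspace W" unfolding W_def by (rule vec.subspace_span)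
  have WK: "W \<subseteq> K" unfolding W_def using C assms(2) vec.span_minimal by blast
  define S where "S = {x + y |x y. x \<in> W \<and> y \<in> I}"
  have sS: "vec.subspace S" unfolding S_def using vec.subspace_sums[OF sW assms(1)] .
  have CS: "C \<subseteq> S"
  proof
    fix c assume "c \<in> C"
    show "c \<in> S"
    proof (cases "c \<in> B")
      case True
      then have "c \<in> I" using B by auto
      then show ?thesis unfolding S_def using vec.subspace_0[OF sW] by force
    next
      case False
      then have "c \<in> W" unfolding W_def using \<open>c \<in> C\<close> vec.span_base by blast
      then show ?thesis unfolding S_def using vec.subspace_0[OF assms(1)] by force
    qed
  qed
  have SK: "S \<subseteq> K" unfolding S_def using WK assms vec.subspace_add by blast
  have dK: "vec.dim K = card C"
    using vec.basis_card_eq_dim[OF C(2) C(4) C(3)] by simp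
  have dS: "card C \<le> vec.dim S"
    using vec.independent_card_le_dim[OF CS C(3)] .
  have dW: "vec.dim W \<le> card (C - B)"
    unfolding W_def vec.dim_span using fC by (intro vec.dim_le_card') simp
  have cC: "card C = card (C - B) + card B"
  proof -
    have "finite B" using fC C(1) finite_subset by blast
    then have "card (C - B) = card C - card B" using C(1) card_Diff_subset by blast
    moreover have "card B \<le> card C" using C(1) fC card_mono by blast
    ultimately show ?thesis by simp
  qed
  have eq: "vec.dim S + vec.dim (W \<inter> I) = vec.dim W + vec.dim I"
    unfolding S_def using vec.dim_sums_Int[OF sW assms(1)] .
  have "vec.dim (W \<inter> I) = 0" using eq dS dW cC B(4) by linarith
  then have "W \<inter> I \<subseteq> {0}" by (rule iffD1[OF vec.dim_eq_0])
  moreover have "vec.dim K \<le> vec.dim W + vec.dim I" using eq dK dS by linarith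
  ultimately show ?thesis using sW WK by blast
qed

lemma hdim_le:
  fixes A :: "complex^'n^'n" and A' :: "complex^'p^'p" and R0 :: "complex^'n^'p"
    and L0 :: "complex^'p^'n" and U :: "complex^'n^'n"
  assumes AA: "\<And>x. A *v (A *v x) = 0" and AA': "\<And>x. A' *v (A' *v x) = 0"
    and RA: "\<And>x. R0 *v (A *v x) = A' *v (R0 *v x)"
    and LA: "\<And>x. L0 *v (A' *v x) = A *v (L0 *v x)"
    and LR: "\<And>x. L0 *v (R0 *v x) = x - A *v (U *v x) - U *v (A *v x)"
  shows "hdim A \<le> hdim A'"
proof -
  define K where "K = {x. A *v x = 0}"
  define I where "I = range (\<lambda>x. A *v x)"
  define K' where "K' = {x. A' *v x = 0}"
  define I' where "I' = range (\<lambda>x. A' *v x)"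
  have sK: "vec.subspace K" "vec.subspace K'" unfolding K_def K'_def by (rule mv_subspace_kernel)+
  have sI: "vec.subspace I" "vec.subspace I'" unfolding I_def I'_def by (rule mv_subspace_range)+
  have IK: "I \<subseteq> K" "I' \<subseteq> K'" unfolding I_def K_def I'_def K'_def using AA AA' by auto
  have key: "x \<in> I" if xK: "x \<in> K" and xI: "R0 *v x \<in> I'" for x
  proof -
    obtain w where w: "R0 *v x = A' *v w" using xI unfolding I'_def by auto
    have "x = L0 *v (R0 *v x) + A *v (U *v x) + U *v (A *v x)" using LR[of x] by simp
    also have "\<dots> = A *v (L0 *v w + U *v x)" using xK w LA unfolding K_def
      by (simp add: matrix_vector_right_distrib)
    finally show ?thesis unfolding I_def by blast
  qed
  obtain W where W: "vec.subspace W" "W \<subseteq> K" "W \<inter> I \<subseteq> {0}" "vec.dim K \<le> vec.dim W + vec.dim I"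
    using complement_exists[OF sI(1) sK(1) IK(1)] by blast
  have lin: "Vector_Spaces.linear (*s) (*s) ((*v) R0)" by simp
  have inj: "inj_on ((*v) R0) (vec.span W)"
  proof -
    have spW: "vec.span W = W" using W(1) vec.span_eq_iff by blast
    have "x = 0" if "x \<in> W" "R0 *v x = 0" for x
    proof -
      have "x \<in> K" using that W(2) by blast
      moreover have "R0 *v x \<in> I'" using that(2) unfolding I'_def
        by (metis matrix_vector_mult_0_right rangeI)
      ultimately have "x \<in> I" using key by blast
      then show ?thesis using W(3) that(1) by blast
    qed
    then show ?thesis unfolding spW
      using vec.linear_inj_on_iff_eq_0[OF lin W(1)] by blast
  qed
  have dimRW: "vec.dim ((*v) R0 ` W) = vec.dim W"
    using vec.dim_image_eq[OF lin inj] .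
  have sRW: "vec.subspace ((*v) R0 ` W)" by (rule vec.linear_subspace_image[OF lin W(1)])
  have int0: "vec.dim ((*v) R0 ` W \<inter> I') = 0"
  proof -
    have "(*v) R0 ` W \<inter> I' \<subseteq> {0}"
    proof
      fix y assume "y \<in> (*v) R0 ` W \<inter> I'"
      then obtain x where x: "x \<in> W" "y = R0 *v x" "y \<in> I'" by blast
      then have "x \<in> I" using key W(2) by blast
      then have "x = 0" using W(3) x(1) by blast
      then show "y \<in> {0}" using x by simp
    qed
    then show ?thesis by (rule iffD2[OF vec.dim_eq_0])
  qed
  have sub: "{x + y |x y. x \<in> (*v) R0 ` W \<and> y \<in> I'} \<subseteq> K'"
  proof -
    have "(*v) R0 ` W \<subseteq> K'"
    proof
      fix y assume "y \<in> (*v) R0 ` W"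
      then obtain x where x: "x \<in> W" "y = R0 *v x" by blast
      then have "A *v x = 0" using W(2) unfolding K_def by blast
      then have "A' *v y = 0" using RA[of x] x(2) by simp
      then show "y \<in> K'" unfolding K'_def by simp
    qed
    then show ?thesis using IK(2) sK(2) vec.subspace_add by blast
  qed
  have "vec.dim {x + y |x y. x \<in> (*v) R0 ` W \<and> y \<in> I'} \<le> vec.dim K'"
    using vec.dim_subset[OF sub] .
  moreover have "vec.dim {x + y |x y. x \<in> (*v) R0 ` W \<and> y \<in> I'} + 0 = vec.dim W + vec.dim I'"
    using vec.dim_sums_Int[OF sRW sI(2)] int0 dimRW by simp
  moreover have "vec.dim I \<le> vec.dim K" "vec.dim I' \<le> vec.dim K'"
    using IK vec.dim_subset by blast+
  ultimately show ?thesis using W(4) unfolding hdim_def K_def K'_def I_def I'_def by linarith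
qed

lemma exact_transfer:
  fixes A B :: "complex^'n^'n" and A' B' U' :: "complex^'p^'p" and R0 Rd :: "complex^'n^'p"
    and L0 Ld :: "complex^'p^'n"
  assumes AA': "\<And>x. A' *v (A' *v x) = 0"
    and AB: "\<And>x. A *v (B *v x) = - (B *v (A *v x))"
    and AB': "\<And>x. A' *v (B' *v x) = - (B' *v (A' *v x))"
    and RA: "\<And>x. R0 *v (A *v x) = A' *v (R0 *v x)"
    and LA: "\<And>x. L0 *v (A' *v x) = A *v (L0 *v x)"
    and RL: "\<And>x. R0 *v (L0 *v x) = x - A' *v (U' *v x) - U' *v (A' *v x)"
    and H7: "\<And>x. Rd *v (A *v x) + R0 *v (B *v x) = B' *v (R0 *v x) + A' *v (Rd *v x)"
    and H8: "\<And>x. Ld *v (A' *v x) + L0 *v (B' *v x) = B *v (L0 *v x) + A *v (Ld *v x)"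
    and ex: "induced_exact A B"
  shows "induced_exact A' B'"
proof -
  have exE: "\<exists>y z. x = B *v y + A *v z \<and> A *v y = 0" if "A *v x = 0" "B *v x \<in> range ((*v) A)" for x
    using ex that unfolding induced_exact_def by blast
  have BB: "B *v (B *v y) \<in> range ((*v) A)" if "A *v y = 0" for y
  proof -
    have "B *v y \<in> {B *v y + A *v z | y z. A *v y = 0}" using that by force
    then show ?thesis using ex unfolding induced_exact_def by blast
  qed
  have BB': "B' *v (B' *v y') \<in> range ((*v) A')" if y': "A' *v y' = 0" for y'
  proof -
    define y where "y = L0 *v y'"
    have Ay: "A *v y = 0" unfolding y_def using LA[of y'] y' by simp
    obtain v where v: "B *v (B *v y) = A *v v" using BB[OF Ay] by blast
    have ABy: "A *v (B *v y) = 0" using AB[of y] Ay by simp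
    have e1: "R0 *v (B *v (B *v y)) = B' *v (R0 *v (B *v y)) + A' *v (Rd *v (B *v y))"
      using H7[of "B *v y"] ABy by (simp add: algebra_simps)
    have e2: "R0 *v (B *v y) = B' *v (R0 *v y) + A' *v (Rd *v y)"
      using H7[of y] Ay by (simp add: algebra_simps)
    have e3: "R0 *v y = y' - A' *v (U' *v y')"
      unfolding y_def using RL[of y'] y' by simp
    have e4: "B' *v (R0 *v y) = B' *v y' + A' *v (B' *v (U' *v y'))"
      using e3 AB'[of "U' *v y'"] by (simp add: matrix_vector_mult_diff_distrib)
    have e5: "B' *v (R0 *v (B *v y)) = B' *v (B' *v y') - A' *v (B' *v (B' *v (U' *v y'))) - A' *v (B' *v (Rd *v y))"
      using e2 e4 AB'[of "B' *v (U' *v y')"] AB'[of "Rd *v y"]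
      by (simp add: matrix_vector_right_distrib)
    have e6: "R0 *v (B *v (B *v y)) = A' *v (R0 *v v)" using v RA by simp
    have "B' *v (B' *v y') = A' *v (R0 *v v + B' *v (B' *v (U' *v y')) + B' *v (Rd *v y) - Rd *v (B *v y))"
      using e1 e5 e6 by (simp add: matrix_vector_right_distrib matrix_vector_mult_diff_distrib algebra_simps)
    then show ?thesis by blast
  qed
  show ?thesis unfolding induced_exact_def
  proof (intro equalityI subsetI)
    fix x' assume "x' \<in> {x. A' *v x = 0 \<and> B' *v x \<in> range ((*v) A')}"
    then obtain z' where x': "A' *v x' = 0" "B' *v x' = A' *v z'" by blast
    define x where "x = L0 *v x'"
    have Ax: "A *v x = 0" unfolding x_def using LA[of x'] x' by simp
    have "B *v x = A *v (L0 *v z') - A *v (Ld *v x')"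
      using H8[of x'] x' LA[of z'] unfolding x_def by (simp add: algebra_simps)
    also have "\<dots> = A *v (L0 *v z' - Ld *v x')" by (simp add: matrix_vector_mult_diff_distrib)
    finally have "B *v x \<in> range ((*v) A)" by blast
    then obtain y z where yz: "x = B *v y + A *v z" "A *v y = 0" using exE Ax by blast
    have "R0 *v x = x' - A' *v (U' *v x')" unfolding x_def using RL[of x'] x' by simp
    moreover have "R0 *v x = B' *v (R0 *v y) + A' *v (Rd *v y + R0 *v z)"
      using yz H7[of y] RA[of z] by (simp add: matrix_vector_right_distrib algebra_simps)
    ultimately have "x' = B' *v (R0 *v y) + A' *v (Rd *v y + R0 *v z + U' *v x')"
      by (simp add: matrix_vector_right_distrib algebra_simps)
    moreover have "A' *v (R0 *v y) = 0" using RA[of y] yz by simp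
    ultimately show "x' \<in> {B' *v y + A' *v z |y z. A' *v y = 0}" by blast
  next
    fix x' assume "x' \<in> {B' *v y + A' *v z |y z. A' *v y = 0}"
    then obtain y' z' where x': "x' = B' *v y' + A' *v z'" "A' *v y' = 0" by blast
    have "A' *v x' = 0" using x' AB'[of y'] AA'[of z'] by (simp add: matrix_vector_right_distrib)
    moreover obtain w where w: "B' *v (B' *v y') = A' *v w" using BB'[OF x'(2)] by blast
    have "B' *v x' = A' *v (w - B' *v z')"
      using x' w AB'[of z'] by (simp add: matrix_vector_right_distrib matrix_vector_mult_diff_distrib)
    ultimately show "x' \<in> {x. A' *v x = 0 \<and> B' *v x \<in> range ((*v) A')}" by blast
  qed
qed



lemma mpoly_line: "mpoly_fun f \<Longrightarrow> \<exists>P. \<forall>t. f (a + t *s v) = poly P t"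
proof (induction rule: mpoly_fun.induct)
  case (const c) then show ?case by (intro exI[of _ "[:c:]"]) simp
next
  case (coord i) then show ?case by (intro exI[of _ "[:a$i, v$i:]"]) simp
next
  case (add f g)
  then obtain P1 P2 where "\<forall>t. f (a + t *s v) = poly P1 t" "\<forall>t. g (a + t *s v) = poly P2 t" by blast
  then show ?case by (intro exI[of _ "P1 + P2"]) simp
next
  case (mult f g)
  then obtain P1 P2 where "\<forall>t. f (a + t *s v) = poly P1 t" "\<forall>t. g (a + t *s v) = poly P2 t" by blast
  then show ?case by (intro exI[of _ "P1 * P2"]) simp
qed

lemma mpoly_prod: "finite S \<Longrightarrow> (\<forall>x\<in>S. mpoly_fun (f x)) \<Longrightarrow> mpoly_fun (\<lambda>k. \<Prod>x\<in>S. f x k)"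
proof (induction S rule: finite_induct)
  case empty then show ?case by (simp add: mpoly_fun.const)
next
  case (insert x F) then show ?case by (simp add: mpoly_fun.mult)
qed

definition lc :: "(complex^'m \<Rightarrow> complex) \<Rightarrow> complex^'m \<Rightarrow> bool" where
  "lc f k0 \<longleftrightarrow> (\<forall>v. isCont (\<lambda>t. f (k0 + t *s v)) 0)"

lemma lc_mpoly: "mpoly_fun f \<Longrightarrow> lc f k0"
  unfolding lc_def
proof
  fix v assume "mpoly_fun f"
  then obtain P where "\<forall>t. f (k0 + t *s v) = poly P t" using mpoly_line by blast
  then have "(\<lambda>t. f (k0 + t *s v)) = poly P" by auto
  then show "isCont (\<lambda>t. f (k0 + t *s v)) 0" by simp
qed

lemma lc_rat: "mpoly_fun p \<Longrightarrow> mpoly_fun g \<Longrightarrow> g k0 \<noteq> 0 \<Longrightarrow> (\<forall>k. f k = p k / g k) \<Longrightarrow> lc f k0"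
  unfolding lc_def
proof
  fix v assume a: "mpoly_fun p" "mpoly_fun g" "g k0 \<noteq> 0" "\<forall>k. f k = p k / g k"
  have c1: "isCont (\<lambda>t. p (k0 + t *s v)) 0" using lc_mpoly[OF a(1)] unfolding lc_def by blast
  have c2: "isCont (\<lambda>t. g (k0 + t *s v)) 0" using lc_mpoly[OF a(2)] unfolding lc_def by blast
  have "isCont (\<lambda>t. p (k0 + t *s v) / g (k0 + t *s v)) 0"
    using isCont_divide[OF c1 c2] a(3) by simp
  then show "isCont (\<lambda>t. f (k0 + t *s v)) 0" using a(4) by simp
qed

lemma lc_add: "lc f k \<Longrightarrow> lc g k \<Longrightarrow> lc (\<lambda>x. f x + g x) k"
  unfolding lc_def by (simp add: isCont_add)
lemma lc_diff: "lc f k \<Longrightarrow> lc g k \<Longrightarrow> lc (\<lambda>x. f x - g x) k"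
  unfolding lc_def by (simp add: isCont_diff)
lemma lc_mult: "lc f k \<Longrightarrow> lc g k \<Longrightarrow> lc (\<lambda>x. f x * g x) k"
  unfolding lc_def by (simp add: isCont_mult)
lemma lc_const: "lc (\<lambda>x. c) k"
  unfolding lc_def by simp
lemma lc_sum: "finite S \<Longrightarrow> (\<And>l. l \<in> S \<Longrightarrow> lc (f l) k) \<Longrightarrow> lc (\<lambda>x. \<Sum>l\<in>S. f l x) k"
  by (induction S rule: finite_induct) (auto simp: lc_const lc_add)

definition mlc :: "(complex^'m \<Rightarrow> complex^'a^'b) \<Rightarrow> complex^'m \<Rightarrow> bool" where
  "mlc M k0 \<longleftrightarrow> (\<forall>i j. lc (\<lambda>k. M k $ i $ j) k0)"

lemma mlc_mult: "mlc M k \<Longrightarrow> mlc N k \<Longrightarrow> mlc (\<lambda>x. M x ** N x) k"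
  unfolding mlc_def matrix_matrix_mult_def by (auto intro!: lc_sum lc_mult)
lemma mlc_diff: "mlc M k \<Longrightarrow> mlc N k \<Longrightarrow> mlc (\<lambda>x. M x - N x) k"
  unfolding mlc_def by (auto intro!: lc_diff)
lemma mlc_const: "mlc (\<lambda>x. C) k"
  unfolding mlc_def by (auto intro!: lc_const)
lemma mlc_poly: "poly_mat M \<Longrightarrow> mlc M k"
  unfolding mlc_def poly_mat_def by (auto intro!: lc_mpoly)

lemma eq_at_scalar:
  fixes f h :: "complex^'m \<Rightarrow> complex"
  assumes g: "mpoly_fun g" "g k1 \<noteq> 0" and fh: "\<forall>k. g k \<noteq> 0 \<longrightarrow> f k = h k"
    and lf: "lc f k0" and lh: "lc h k0"
  shows "f k0 = h k0"
proof -
  define v where "v = k1 - k0"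
  obtain P where P: "\<forall>t. g (k0 + t *s v) = poly P t" using mpoly_line[OF g(1)] by blast
  have "poly P 1 = g k1" using P[rule_format, of 1] unfolding v_def by simp
  then have "P \<noteq> 0" using g(2) by auto
  then have fin: "finite {t. poly P t = 0}" by (rule poly_roots_finite)
  define S where "S = - ({t. poly P t = 0} - {0})"
  have oS: "open S" unfolding S_def using fin by (intro open_Compl finite_imp_closed) simp
  have ev: "eventually (\<lambda>t. f (k0 + t *s v) = h (k0 + t *s v)) (at 0)"
    unfolding eventually_at_topological
  proof (intro exI[of _ S] conjI ballI impI)
    show "open S" by fact
    show "(0::complex) \<in> S" unfolding S_def by simp
    fix t assume "t \<in> S" "t \<noteq> 0"
    then have "g (k0 + t *s v) \<noteq> 0" using P unfolding S_def by auto
    then show "f (k0 + t *s v) = h (k0 + t *s v)" using fh by blast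
  qed
  have t1: "((\<lambda>t. f (k0 + t *s v)) \<longlongrightarrow> f k0) (at 0)"
    using lf[unfolded lc_def, rule_format, of v] unfolding isCont_def by simp
  have t2: "((\<lambda>t. h (k0 + t *s v)) \<longlongrightarrow> h k0) (at 0)"
    using lh[unfolded lc_def, rule_format, of v] unfolding isCont_def by simp
  have t3: "((\<lambda>t. f (k0 + t *s v)) \<longlongrightarrow> h k0) (at 0)"
    using tendsto_cong[OF ev] t2 by blast
  show ?thesis using tendsto_unique[OF _ t1 t3] by simp
qed

lemma eq_at:
  assumes "eq_over_Ck F G" "mlc F k0" "mlc G k0"
  shows "F k0 = G k0"
proof -
  obtain g k1 where g: "mpoly_fun g" "g k1 \<noteq> 0" "\<forall>k. g k \<noteq> 0 \<longrightarrow> F k = G k"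
    using assms(1) unfolding eq_over_Ck_def by blast
  have "F k0 $ i $ j = G k0 $ i $ j" for i j
    using eq_at_scalar[OF g(1,2), of "\<lambda>k. F k $ i $ j" "\<lambda>k. G k $ i $ j" k0] g(3) assms(2,3)
    unfolding mlc_def by auto
  then show ?thesis by (simp add: vec_eq_iff)
qed

definition mdot :: "(complex^'m \<Rightarrow> complex^'a^'b) \<Rightarrow> complex^'m \<Rightarrow> complex^'m \<Rightarrow> complex^'a^'b" where
  "mdot M q \<xi> = (\<chi> i j. dirderiv (\<lambda>k. M k $ i $ j) q \<xi>)"

lemma ld_rat:
  assumes "rat_regular_at q f"
  shows "((\<lambda>t. f (q + t *s \<xi>)) has_field_derivative dirderiv f q \<xi>) (at 0)"
proof -
  obtain p g where pg: "mpoly_fun p" "mpoly_fun g" "g q \<noteq> 0" "\<forall>k. f k = p k / g k"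
    using assms unfolding rat_regular_at_def by blast
  obtain P where P: "\<forall>t. p (q + t *s \<xi>) = poly P t" using mpoly_line[OF pg(1)] by blast
  obtain G where G: "\<forall>t. g (q + t *s \<xi>) = poly G t" using mpoly_line[OF pg(2)] by blast
  have G0: "poly G 0 \<noteq> 0" using G[rule_format, of 0] pg(3) by simp
  have feq: "(\<lambda>t. f (q + t *s \<xi>)) = (\<lambda>t. poly P t / poly G t)" using pg(4) P G by auto
  have "((\<lambda>t. poly P t / poly G t) has_field_derivative
      (poly (pderiv P) 0 * poly G 0 - poly P 0 * poly (pderiv G) 0) / (poly G 0 * poly G 0)) (at 0)"
    by (rule DERIV_divide[OF poly_DERIV poly_DERIV G0])
  then have "(\<lambda>t. f (q + t *s \<xi>)) field_differentiable at 0"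
    unfolding feq field_differentiable_def by blast
  then show ?thesis unfolding dirderiv_def using DERIV_deriv_iff_field_differentiable by blast
qed

lemma rat_mpoly: "mpoly_fun f \<Longrightarrow> rat_regular_at q f"
  unfolding rat_regular_at_def
  by (rule exI[of _ f], rule exI[of _ "\<lambda>k. 1"]) (simp add: mpoly_fun.const)

definition mld :: "(complex^'m \<Rightarrow> complex^'a^'b) \<Rightarrow> complex^'m \<Rightarrow> complex^'m \<Rightarrow> bool" where
  "mld M q \<xi> \<longleftrightarrow> (\<forall>i j. ((\<lambda>t. M (q + t *s \<xi>) $ i $ j) has_field_derivative mdot M q \<xi> $ i $ j) (at 0))"

lemma mld_rat: "rat_mat_regular_at q M \<Longrightarrow> mld M q \<xi>"
  unfolding mld_def mdot_def rat_mat_regular_at_def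
proof (intro allI)
  fix i j assume "\<forall>i j. rat_regular_at q (\<lambda>k. M k $ i $ j)"
  then show "((\<lambda>t. M (q + t *s \<xi>) $ i $ j) has_field_derivative (\<chi> i j. dirderiv (\<lambda>k. M k $ i $ j) q \<xi>) $ i $ j) (at 0)"
    using ld_rat[of q "\<lambda>k. M k $ i $ j" \<xi>] by simp
qed

lemma mld_poly: "poly_mat M \<Longrightarrow> mld M q \<xi>"
  by (rule mld_rat) (simp add: poly_mat_def rat_mat_regular_at_def rat_mpoly)

lemma mld_mult:
  assumes "mld M q \<xi>" "mld N q \<xi>"
  shows "((\<lambda>t. (M (q + t *s \<xi>) ** N (q + t *s \<xi>)) $ i $ j) has_field_derivative
           (mdot M q \<xi> ** N q + M q ** mdot N q \<xi>) $ i $ j) (at 0)"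
proof -
  have "((\<lambda>t. \<Sum>l\<in>UNIV. M (q + t *s \<xi>) $ i $ l * N (q + t *s \<xi>) $ l $ j) has_field_derivative
      (\<Sum>l\<in>UNIV. mdot M q \<xi> $ i $ l * N (q + 0 *s \<xi>) $ l $ j + mdot N q \<xi> $ l $ j * M (q + 0 *s \<xi>) $ i $ l)) (at 0)"
    using assms unfolding mld_def by (intro DERIV_sum DERIV_mult) auto
  then show ?thesis
    by (simp add: matrix_matrix_mult_def sum.distrib mult.commute)
qed

lemma deriv_eq:
  fixes F G :: "complex \<Rightarrow> complex"
  assumes "eventually (\<lambda>t. F t = G t) (nhds 0)" "(F has_field_derivative a) (at 0)" "(G has_field_derivative b) (at 0)"
  shows "a = b"
proof -
  have "(G has_field_derivative a) (at 0)" using DERIV_cong_ev[OF refl assms(1) refl] assms(2) by blast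
  then show ?thesis using DERIV_unique assms(3) by blast
qed

lemma rat_mat_good:
  assumes "rat_mat_regular_at q M"
  shows "\<exists>G. mpoly_fun G \<and> G q \<noteq> 0 \<and> (\<forall>k. G k \<noteq> 0 \<longrightarrow> mlc M k)"
proof -
  have "\<forall>ij. \<exists>g. \<exists>p. mpoly_fun p \<and> mpoly_fun g \<and> g q \<noteq> 0 \<and> (\<forall>k. M k $ fst ij $ snd ij = p k / g k)"
    using assms unfolding rat_mat_regular_at_def rat_regular_at_def by blast
  then obtain g where g: "\<forall>ij. \<exists>p. mpoly_fun p \<and> mpoly_fun (g ij) \<and> g ij q \<noteq> 0 \<and> (\<forall>k. M k $ fst ij $ snd ij = p k / g ij k)"
    by metis
  define G where "G k = (\<Prod>ij\<in>UNIV. g ij k)" for k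
  have "mpoly_fun G" unfolding G_def[abs_def] using g by (intro mpoly_prod) auto
  moreover have "G q \<noteq> 0"
  proof -
    have "\<forall>ij. g ij q \<noteq> 0" using g by blast
    then show ?thesis unfolding G_def by (simp add: prod_zero_iff)
  qed
  moreover have "mlc M k" if "G k \<noteq> 0" for k
    unfolding mlc_def
  proof (intro allI)
    fix i j
    have "g (i, j) k \<noteq> 0" using that unfolding G_def by (simp add: prod_zero_iff)
    moreover obtain p where "mpoly_fun p" "mpoly_fun (g (i, j))" "\<forall>k. M k $ i $ j = p k / g (i, j) k"
      using g[rule_format, of "(i,j)"] by auto
    ultimately show "lc (\<lambda>k. M k $ i $ j) k" using lc_rat[of p "g (i,j)" k "\<lambda>k. M k $ i $ j"] by simp
  qed
  ultimately show ?thesis by blast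
qed

lemma eventually_line_ne:
  assumes "mpoly_fun D" "D q \<noteq> 0"
  shows "eventually (\<lambda>t. D (q + t *s \<xi>) \<noteq> 0) (nhds 0)"
proof -
  obtain P where P: "\<forall>t. D (q + t *s \<xi>) = poly P t" using mpoly_line[OF assms(1)] by blast
  have "poly P 0 \<noteq> 0" using P[rule_format, of 0] assms(2) by simp
  then have "P \<noteq> 0" by auto
  then have fin: "finite {t. poly P t = 0}" by (rule poly_roots_finite)
  have "open (- {t. poly P t = 0})" using fin by (intro open_Compl finite_imp_closed)
  moreover have "(0::complex) \<in> - {t. poly P t = 0}" using \<open>poly P 0 \<noteq> 0\<close> by simp
  ultimately have "eventually (\<lambda>t. t \<in> - {t. poly P t = 0}) (nhds 0)" by (rule eventually_nhds_in_open)
  then show ?thesis using P by simp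
qed



lemma mvE: "X = Y \<Longrightarrow> X *v x = Y *v x" by simp

lemma hdim_eq_pt:
  fixes A :: "complex^'n^'n" and A' :: "complex^'p^'p" and R0 :: "complex^'n^'p"
    and L0 :: "complex^'p^'n" and U :: "complex^'n^'n" and U' :: "complex^'p^'p"
  assumes "A ** A = 0" "A' ** A' = 0" "R0 ** A = A' ** R0" "L0 ** A' = A ** L0"
    "L0 ** R0 = mat 1 - A ** U - U ** A" "R0 ** L0 = mat 1 - A' ** U' - U' ** A'"
  shows "hdim A = hdim A'"
proof -
  note s = matrix_vector_mult_diff_rdistrib matrix_vector_mult_add_rdistrib
  have v1: "\<And>x. A *v (A *v x) = 0" "\<And>x. A' *v (A' *v x) = 0"
    using mvE[OF assms(1)] mvE[OF assms(2)] by (simp_all flip: matrix_vector_mul_assoc)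
  have v3: "\<And>x. R0 *v (A *v x) = A' *v (R0 *v x)" "\<And>x. L0 *v (A' *v x) = A *v (L0 *v x)"
    using mvE[OF assms(3)] mvE[OF assms(4)] by (simp_all flip: matrix_vector_mul_assoc)
  have v5: "\<And>x. L0 *v (R0 *v x) = x - A *v (U *v x) - U *v (A *v x)"
    "\<And>x. R0 *v (L0 *v x) = x - A' *v (U' *v x) - U' *v (A' *v x)"
    using mvE[OF assms(5)] mvE[OF assms(6)] by (simp_all add: s flip: matrix_vector_mul_assoc)
  show ?thesis using hdim_le[of A A' R0 L0 U, OF v1 v3 v5(1)] hdim_le[of A' A L0 R0 U', OF v1(2,1) v3(2,1) v5(2)]
    by simp
qed

lemma exact_pt:
  fixes A B :: "complex^'n^'n" and A' B' U' :: "complex^'p^'p" and R0 Rd :: "complex^'n^'p"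
    and L0 Ld :: "complex^'p^'n"
  assumes "A' ** A' = 0" "A ** B + B ** A = 0" "A' ** B' + B' ** A' = 0"
    "R0 ** A = A' ** R0" "L0 ** A' = A ** L0" "R0 ** L0 = mat 1 - A' ** U' - U' ** A'"
    "Rd ** A + R0 ** B = B' ** R0 + A' ** Rd" "Ld ** A' + L0 ** B' = B ** L0 + A ** Ld"
    "induced_exact A B"
  shows "induced_exact A' B'"
proof (rule exact_transfer[of A' A B B' R0 L0 U' Rd Ld])
  note s = matrix_vector_mult_diff_rdistrib matrix_vector_mult_add_rdistrib
  show "\<And>x. A' *v (A' *v x) = 0" using mvE[OF assms(1)] by (simp flip: matrix_vector_mul_assoc)
  show "\<And>x. A *v (B *v x) = - (B *v (A *v x))" using mvE[OF assms(2)]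
    by (simp add: s eq_neg_iff_add_eq_0 flip: matrix_vector_mul_assoc)
  show "\<And>x. A' *v (B' *v x) = - (B' *v (A' *v x))" using mvE[OF assms(3)]
    by (simp add: s eq_neg_iff_add_eq_0 flip: matrix_vector_mul_assoc)
  show "\<And>x. R0 *v (A *v x) = A' *v (R0 *v x)" using mvE[OF assms(4)] by (simp flip: matrix_vector_mul_assoc)
  show "\<And>x. L0 *v (A' *v x) = A *v (L0 *v x)" using mvE[OF assms(5)] by (simp flip: matrix_vector_mul_assoc)
  show "\<And>x. R0 *v (L0 *v x) = x - A' *v (U' *v x) - U' *v (A' *v x)" using mvE[OF assms(6)]
    by (simp add: s flip: matrix_vector_mul_assoc)
  show "\<And>x. Rd *v (A *v x) + R0 *v (B *v x) = B' *v (R0 *v x) + A' *v (Rd *v x)" using mvE[OF assms(7)]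
    by (simp add: s flip: matrix_vector_mul_assoc)
  show "\<And>x. Ld *v (A' *v x) + L0 *v (B' *v x) = B *v (L0 *v x) + A *v (Ld *v x)" using mvE[OF assms(8)]
    by (simp add: s flip: matrix_vector_mul_assoc)
  show "induced_exact A B" by fact
qed

lemma main_dir:
  fixes Q :: "complex^'m \<Rightarrow> complex"
    and degC :: "'n::finite \<Rightarrow> int" and degC' :: "'p::finite \<Rightarrow> int"
    and d :: "complex^'m \<Rightarrow> complex^'n^'n" and d' :: "complex^'m \<Rightarrow> complex^'p^'p"
    and R :: "complex^'m \<Rightarrow> complex^'n^'p" and L :: "complex^'m \<Rightarrow> complex^'p^'n"
    and u :: "complex^'m \<Rightarrow> complex^'n^'n" and u' :: "complex^'m \<Rightarrow> complex^'p^'p"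
    and q :: "complex^'m"
  assumes pd: "poly_complex degC d" and pd': "poly_complex degC' d'"
    and he: "homotopy_equiv_Ck degC degC' d d' R L u u'"
    and rR: "rat_mat_regular_at q R" and rL: "rat_mat_regular_at q L"
    and ru: "rat_mat_regular_at q u" and ru': "rat_mat_regular_at q u'"
    and rh: "regular_homology_point Q d q"
  shows "regular_homology_point Q d' q"
proof -
  have e1: "eq_over_Ck (\<lambda>k. R k ** d k) (\<lambda>k. d' k ** R k)"
    and e2: "eq_over_Ck (\<lambda>k. L k ** d' k) (\<lambda>k. d k ** L k)"
    and e3: "eq_over_Ck (\<lambda>k. L k ** R k) (\<lambda>k. mat 1 - d k ** u k - u k ** d k)"
    and e4: "eq_over_Ck (\<lambda>k. R k ** L k) (\<lambda>k. mat 1 - d' k ** u' k - u' k ** d' k)"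
    using he unfolding homotopy_equiv_Ck_def by blast+
  have pmd: "poly_mat d" "poly_mat d'" using pd pd' unfolding poly_complex_def by blast+
  have dd: "\<And>k. d k ** d k = 0" "\<And>k. d' k ** d' k = 0" using pd pd' unfolding poly_complex_def by blast+
  obtain GR where GR: "mpoly_fun GR" "GR q \<noteq> 0" "\<forall>k. GR k \<noteq> 0 \<longrightarrow> mlc R k" using rat_mat_good[OF rR] by blast
  obtain GL where GL: "mpoly_fun GL" "GL q \<noteq> 0" "\<forall>k. GL k \<noteq> 0 \<longrightarrow> mlc L k" using rat_mat_good[OF rL] by blast
  obtain Gu where Gu: "mpoly_fun Gu" "Gu q \<noteq> 0" "\<forall>k. Gu k \<noteq> 0 \<longrightarrow> mlc u k" using rat_mat_good[OF ru] by blast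
  obtain Gu' where Gu': "mpoly_fun Gu'" "Gu' q \<noteq> 0" "\<forall>k. Gu' k \<noteq> 0 \<longrightarrow> mlc u' k" using rat_mat_good[OF ru'] by blast
  define D where "D k = GR k * GL k * Gu k * Gu' k" for k
  have mD: "mpoly_fun D" unfolding D_def[abs_def] using GR GL Gu Gu' by (intro mpoly_fun.mult) auto
  have Dq: "D q \<noteq> 0" unfolding D_def using GR GL Gu Gu' by simp
  have ids: "R k ** d k = d' k ** R k \<and> L k ** d' k = d k ** L k \<and>
      L k ** R k = mat 1 - d k ** u k - u k ** d k \<and> R k ** L k = mat 1 - d' k ** u' k - u' k ** d' k"
    if Dk: "D k \<noteq> 0" for k
  proof -
    have m: "mlc R k" "mlc L k" "mlc u k" "mlc u' k" "mlc d k" "mlc d' k"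
      using Dk GR GL Gu Gu' mlc_poly[OF pmd(1)] mlc_poly[OF pmd(2)] unfolding D_def by auto
    show ?thesis
      using eq_at[OF e1] eq_at[OF e2] eq_at[OF e3] eq_at[OF e4] m
      by (simp add: mlc_mult mlc_diff mlc_const)
  qed
  have hd: "hdim (d k) = hdim (d' k)" if "D k \<noteq> 0" for k
    using ids[OF that] dd by (intro hdim_eq_pt[of _ _ "R k" "L k" "u k" "u' k"]) auto
  obtain g where g: "mpoly_fun g" "g q \<noteq> 0" "\<forall>k. Q k = 0 \<and> g k \<noteq> 0 \<longrightarrow> hdim (d k) = hdim (d q)"
    using rh unfolding regular_homology_point_def by blast
  obtain \<xi> where xi: "dirderiv Q q \<xi> \<noteq> 0" "induced_exact (d q) (dmat_dot d q \<xi>)"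
    using rh unfolding regular_homology_point_def by blast
  have c2: "\<exists>g. mpoly_fun g \<and> g q \<noteq> 0 \<and> (\<forall>k. Q k = 0 \<and> g k \<noteq> 0 \<longrightarrow> hdim (d' k) = hdim (d' q))"
  proof (intro exI[of _ "\<lambda>k. g k * D k"] conjI allI impI)
    show "mpoly_fun (\<lambda>k. g k * D k)" using g(1) mD by (rule mpoly_fun.mult)
    show "g q * D q \<noteq> 0" using g(2) Dq by simp
    fix k assume "Q k = 0 \<and> g k * D k \<noteq> 0"
    then show "hdim (d' k) = hdim (d' q)" using g(3) hd Dq by (metis mult_eq_0_iff)
  qed
  define l where "l t = q + t *s \<xi>" for t
  have ev: "eventually (\<lambda>t. D (l t) \<noteq> 0) (nhds 0)" unfolding l_def by (rule eventually_line_ne[OF mD Dq])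
  have l0: "l 0 = q" unfolding l_def by simp
  have mR: "mld R q \<xi>" and mL: "mld L q \<xi>" using mld_rat rR rL by blast+
  have md: "mld d q \<xi>" and md': "mld d' q \<xi>" using mld_poly pmd by blast+
  have H7: "mdot R q \<xi> ** d q + R q ** mdot d q \<xi> = mdot d' q \<xi> ** R q + d' q ** mdot R q \<xi>"
  proof -
    have "(mdot R q \<xi> ** d q + R q ** mdot d q \<xi>) $ i $ j = (mdot d' q \<xi> ** R q + d' q ** mdot R q \<xi>) $ i $ j" for i j
    proof (rule deriv_eq[OF _ mld_mult[OF mR md] mld_mult[OF md' mR]])
      show "eventually (\<lambda>t. (R (q + t *s \<xi>) ** d (q + t *s \<xi>)) $ i $ j = (d' (q + t *s \<xi>) ** R (q + t *s \<xi>)) $ i $ j) (nhds 0)"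
        using ev ids unfolding l_def by (auto elim!: eventually_mono)
    qed
    then show ?thesis by (simp add: vec_eq_iff)
  qed
  have H8: "mdot L q \<xi> ** d' q + L q ** mdot d' q \<xi> = mdot d q \<xi> ** L q + d q ** mdot L q \<xi>"
  proof -
    have "(mdot L q \<xi> ** d' q + L q ** mdot d' q \<xi>) $ i $ j = (mdot d q \<xi> ** L q + d q ** mdot L q \<xi>) $ i $ j" for i j
    proof (rule deriv_eq[OF _ mld_mult[OF mL md'] mld_mult[OF md mL]])
      show "eventually (\<lambda>t. (L (q + t *s \<xi>) ** d' (q + t *s \<xi>)) $ i $ j = (d (q + t *s \<xi>) ** L (q + t *s \<xi>)) $ i $ j) (nhds 0)"
        using ev ids unfolding l_def by (auto elim!: eventually_mono)
    qed
    then show ?thesis by (simp add: vec_eq_iff)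
  qed
  have H2: "d q ** mdot d q \<xi> + mdot d q \<xi> ** d q = 0"
  proof -
    have "(mdot d q \<xi> ** d q + d q ** mdot d q \<xi>) $ i $ j = 0" for i j
    proof (rule deriv_eq[OF _ mld_mult[OF md md] DERIV_const])
      show "eventually (\<lambda>t. (d (q + t *s \<xi>) ** d (q + t *s \<xi>)) $ i $ j = 0) (nhds 0)"
        using dd by simp
    qed
    then show ?thesis by (simp add: vec_eq_iff add.commute)
  qed
  have H2': "d' q ** mdot d' q \<xi> + mdot d' q \<xi> ** d' q = 0"
  proof -
    have "(mdot d' q \<xi> ** d' q + d' q ** mdot d' q \<xi>) $ i $ j = 0" for i j
    proof (rule deriv_eq[OF _ mld_mult[OF md' md'] DERIV_const])
      show "eventually (\<lambda>t. (d' (q + t *s \<xi>) ** d' (q + t *s \<xi>)) $ i $ j = 0) (nhds 0)"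
        using dd by simp
    qed
    then show ?thesis by (simp add: vec_eq_iff add.commute)
  qed
  have dm: "dmat_dot d q \<xi> = mdot d q \<xi>" "dmat_dot d' q \<xi> = mdot d' q \<xi>"
    unfolding dmat_dot_def mdot_def by simp_all
  have "induced_exact (d' q) (dmat_dot d' q \<xi>)"
    unfolding dm
    using exact_pt[of "d' q" "d q" "mdot d q \<xi>" "mdot d' q \<xi>" "R q" "L q" "u' q" "mdot R q \<xi>" "mdot L q \<xi>"]
      dd H2 H2' ids[OF Dq] H7 H8 xi(2) dm(1) by simp
  then show ?thesis using rh c2 xi(1) unfolding regular_homology_point_def by blast
qed


lemma he_sym:
  "homotopy_equiv_Ck degC degC' d d' R L u u' \<Longrightarrow> homotopy_equiv_Ck degC' degC d' d L R u' u"
  unfolding homotopy_equiv_Ck_def by blast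

theorem mainTheorem6:
  fixes Q :: "complex^'m \<Rightarrow> complex"
    and degC :: "'n::finite \<Rightarrow> int" and degC' :: "'p::finite \<Rightarrow> int"
    and d :: "complex^'m \<Rightarrow> complex^'n^'n" and d' :: "complex^'m \<Rightarrow> complex^'p^'p"
    and R :: "complex^'m \<Rightarrow> complex^'n^'p" and L :: "complex^'m \<Rightarrow> complex^'p^'n"
    and u :: "complex^'m \<Rightarrow> complex^'n^'n" and u' :: "complex^'m \<Rightarrow> complex^'p^'p"
    and q :: "complex^'m"
  assumes "irreducible_mpoly Q"
    and "poly_complex degC d" and "poly_complex degC' d'"
    and "homology_only_along Q d" and "homology_only_along Q d'"
    and "Q q = 0"
    and "homotopy_equiv_Ck degC degC' d d' R L u u'"
    and "rat_mat_regular_at q R" and "rat_mat_regular_at q L"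
    and "rat_mat_regular_at q u" and "rat_mat_regular_at q u'"
  shows "regular_homology_point Q d q \<longleftrightarrow> regular_homology_point Q d' q"
proof
  assume "regular_homology_point Q d q"
  then show "regular_homology_point Q d' q"
    using main_dir[OF assms(2,3,7,8,9,10,11)] by blast
next
  assume "regular_homology_point Q d' q"
  then show "regular_homology_point Q d q"
    using main_dir[OF assms(3,2) he_sym[OF assms(7)] assms(9,8,11,10)] by blast
qed

end
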